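(* Let $\mu>0$ and $\Sigma=\{0,1,\dots,\mu\}$. The language $\mathcal{L}_{LA}=\{A\in\Sigma^\omega : \text{the limit-average of } A \text{ exists}\}$ is neither $\omega$-regular nor $\omega$-context-free.
   Context: For a sequence $M$, $\mathrm{Sum}(M[0,n-1])=\sum_{j=0}^{n-1}M[j]$. The limit-average of $M$ exists iff $\liminf_{n\to\infty}\frac1n\mathrm{Sum}(M[0,n-1])=\limsup_{n\to\infty}\frac1n\mathrm{Sum}(M[0,n-1])$, and then $\mathrm{LA}(M)$ is this common value. An $\omega$-context-free language is one accepted by a B\"uchi pushdown automaton. *)

theory Defs
  imports Complex_Main "HOL-Library.Extended_Real"
begin

definition omega_words :: "nat set \<Rightarrow> (nat \<Rightarrow> nat) set" where
  "omega_words Sig = {w. \<forall>i. w i \<in> Sig}"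

definition prefix_sum :: "(nat \<Rightarrow> nat) \<Rightarrow> nat \<Rightarrow> real" where
  "prefix_sum M n = (\<Sum>j<n. real (M j))"

definition limit_average_exists :: "(nat \<Rightarrow> nat) \<Rightarrow> bool" where
  "limit_average_exists M \<longleftrightarrow>
     liminf (\<lambda>n. ereal (prefix_sum M n / real n)) = limsup (\<lambda>n. ereal (prefix_sum M n / real n))"

definition L_LA :: "nat \<Rightarrow> (nat \<Rightarrow> nat) set" where
  "L_LA mu = {A \<in> omega_words {0..mu}. limit_average_exists A}"

definition buchi_accepts ::
  "(nat \<times> nat \<times> nat) set \<Rightarrow> nat \<Rightarrow> nat set \<Rightarrow> (nat \<Rightarrow> nat) \<Rightarrow> bool" where
  "buchi_accepts delta q0 F w \<longleftrightarrow>
     (\<exists>r. r 0 = q0 \<and> (\<forall>i. (r i, w i, r (Suc i)) \<in> delta) \<and> (\<exists>\<^sub>\<infinity>i. r i \<in> F))"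

definition omega_regular :: "nat set \<Rightarrow> (nat \<Rightarrow> nat) set \<Rightarrow> bool" where
  "omega_regular Sig L \<longleftrightarrow> L \<subseteq> omega_words Sig \<and>
     (\<exists>Q delta q0 F. finite Q \<and> delta \<subseteq> Q \<times> Sig \<times> Q \<and> q0 \<in> Q \<and> F \<subseteq> Q \<and>
        L = {w \<in> omega_words Sig. buchi_accepts delta q0 F w})"

text \<open>A transition (p, a, Z, p', gamma) in state p with top-of-stack Z reads a
  (None = epsilon move, Some x = reads letter x), replaces Z by the list gamma
  (head = new top) and moves to p'.
  A run on w is an infinite sequence of configurations with input positions pos;
  it is accepting if the whole word is read and accepting states occur infinitely often.\<close>
type_synonym pda_trans = "nat \<times> nat option \<times> nat \<times> nat \<times> nat list"

definition bpda_step :: "pda_trans set \<Rightarrow> (nat \<Rightarrow> nat) \<Rightarrow>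
    (nat \<times> nat list) \<Rightarrow> nat \<Rightarrow> (nat \<times> nat list) \<Rightarrow> nat \<Rightarrow> bool" where
  "bpda_step delta w c k c' k' \<longleftrightarrow>
     (\<exists>p a Z p' gam rest. (p, a, Z, p', gam) \<in> delta \<and>
        c = (p, Z # rest) \<and> c' = (p', gam @ rest) \<and>
        ((a = None \<and> k' = k) \<or> (a = Some (w k) \<and> k' = Suc k)))"

definition bpda_accepts ::
  "pda_trans set \<Rightarrow> nat \<Rightarrow> nat \<Rightarrow> nat set \<Rightarrow> (nat \<Rightarrow> nat) \<Rightarrow> bool" where
  "bpda_accepts delta q0 Z0 F w \<longleftrightarrow>
     (\<exists>c pos. c 0 = (q0, [Z0]) \<and> pos 0 = 0 \<and>
        (\<forall>i. bpda_step delta w (c i) (pos i) (c (Suc i)) (pos (Suc i))) \<and>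
        (\<forall>n. \<exists>i. n \<le> pos i) \<and>
        (\<exists>\<^sub>\<infinity>i. fst (c i) \<in> F))"

definition omega_context_free :: "nat set \<Rightarrow> (nat \<Rightarrow> nat) set \<Rightarrow> bool" where
  "omega_context_free Sig L \<longleftrightarrow> L \<subseteq> omega_words Sig \<and>
     (\<exists>Q Gam delta q0 Z0 F. finite Q \<and> finite Gam \<and> finite delta \<and>
        delta \<subseteq> {(p, a, Z, p', gam). p \<in> Q \<and> (a = None \<or> the a \<in> Sig) \<and> Z \<in> Gam \<and>
                                   p' \<in> Q \<and> set gam \<subseteq> Gam} \<and>
        q0 \<in> Q \<and> Z0 \<in> Gam \<and> F \<subseteq> Q \<and>
        L = {w \<in> omega_words Sig. bpda_accepts delta q0 Z0 F w})"

end

theory Submission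
  imports Defs
begin


definition concat_pieces :: "(nat \<Rightarrow> nat) \<Rightarrow> (nat \<Rightarrow> nat \<Rightarrow> 'a) \<Rightarrow> nat \<Rightarrow> 'a" where
  "concat_pieces L P t = (SOME x. \<exists>k i. i < L k \<and> t = (\<Sum>m<k. L m) + i \<and> x = P k i)"

lemma pieces_decomp:
  fixes L :: "nat \<Rightarrow> nat"
  assumes "\<forall>k. 0 < L k"
  shows "\<exists>k i. i < L k \<and> t = (\<Sum>m<k. L m) + i"
proof (induction t)
  case 0
  then show ?case using assms by (intro exI[of _ 0]) auto
next
  case (Suc t)
  then obtain k i where ki: "i < L k" "t = (\<Sum>m<k. L m) + i" by blast
  show ?case
  proof (cases "Suc i < L k")
    case True
    then show ?thesis using ki by (intro exI[of _ k] exI[of _ "Suc i"]) auto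
  next
    case False
    then have "Suc i = L k" using ki by auto
    then show ?thesis using ki assms by (intro exI[of _ "Suc k"] exI[of _ 0]) auto
  qed
qed

lemma pieces_mono:
  fixes L :: "nat \<Rightarrow> nat"
  assumes "\<forall>k. 0 < L k" "k < k'"
  shows "(\<Sum>m<k. L m) + L k \<le> (\<Sum>m<k'. L m)"
proof -
  have "(\<Sum>m<k. L m) + L k = (\<Sum>m<Suc k. L m)" by simp
  also have "\<dots> \<le> (\<Sum>m<k'. L m)"
    by (rule sum_mono2) (use assms in auto)
  finally show ?thesis .
qed

lemma pieces_unique:
  fixes L :: "nat \<Rightarrow> nat"
  assumes "\<forall>k. 0 < L k" "i < L k" "i' < L k'" "(\<Sum>m<k. L m) + i = (\<Sum>m<k'. L m) + i'"
  shows "k = k' \<and> i = i'"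
proof -
  have "\<not> k < k'" using pieces_mono[OF assms(1), of k k'] assms by auto
  moreover have "\<not> k' < k" using pieces_mono[OF assms(1), of k' k] assms by auto
  ultimately have "k = k'" by auto
  then show ?thesis using assms by auto
qed

lemma concat_pieces_eq:
  fixes L :: "nat \<Rightarrow> nat"
  assumes "\<forall>k. 0 < L k" "i < L k"
  shows "concat_pieces L P ((\<Sum>m<k. L m) + i) = P k i"
proof -
  have "\<exists>x. \<exists>k' i'. i' < L k' \<and> (\<Sum>m<k. L m) + i = (\<Sum>m<k'. L m) + i' \<and> x = P k' i'"
    using assms by blast
  then have "\<exists>k' i'. i' < L k' \<and> (\<Sum>m<k. L m) + i = (\<Sum>m<k'. L m) + i' \<and> concat_pieces L P ((\<Sum>m<k. L m) + i) = P k' i'"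
    unfolding concat_pieces_def by (rule someI_ex)
  then obtain k' i' where "i' < L k'" "(\<Sum>m<k. L m) + i = (\<Sum>m<k'. L m) + i'"
    "concat_pieces L P ((\<Sum>m<k. L m) + i) = P k' i'" by blast
  with pieces_unique[OF assms(1) assms(2) this(1,2)] show ?thesis by simp
qed

lemma concat_pieces_eq_le:
  fixes L :: "nat \<Rightarrow> nat"
  assumes "\<forall>k. 0 < L k" "i \<le> L k" "\<forall>k. P k (L k) = P (Suc k) 0"
  shows "concat_pieces L P ((\<Sum>m<k. L m) + i) = P k i"
proof (cases "i < L k")
  case True
  then show ?thesis using concat_pieces_eq assms by blast
next
  case False
  then have "i = L k" using assms by auto
  then have "(\<Sum>m<k. L m) + i = (\<Sum>m<Suc k. L m) + 0" by simp
  then show ?thesis using concat_pieces_eq[OF assms(1), of 0 "Suc k" P] assms \<open>i = L k\<close> by simp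
qed

lemma sum_ge_count:
  assumes "\<forall>k. 0 < (L::nat\<Rightarrow>nat) k"
  shows "k \<le> (\<Sum>m<k. L m)"
proof -
  have "(\<Sum>m<k. (1::nat)) \<le> (\<Sum>m<k. L m)" by (rule sum_mono) (use assms in \<open>auto simp: Suc_le_eq\<close>)
  then show ?thesis by simp
qed



lemma arch_mult:
  fixes c d :: real
  assumes "d > 0"
  shows "\<exists>k::nat. 1 \<le> k \<and> c \<le> real k * d"
proof -
  obtain n :: nat where "c / d < real n" using reals_Archimedean2 by blast
  then have "c \<le> real (Suc n) * d" using assms by (simp add: field_simps)
  then show ?thesis by (intro exI[of _ "Suc n"]) auto
qed

lemma transition_exists:
  assumes "m a" "\<not> m b" "a \<le> b"
  shows "\<exists>n. a \<le> n \<and> n < b \<and> m n \<and> \<not> m (Suc n)"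
  using assms
proof (induction b)
  case 0 then show ?case by auto
next
  case (Suc b)
  show ?case
  proof (cases "m b")
    case True
    have "a \<noteq> Suc b" using Suc by auto
    then show ?thesis using Suc True by (intro exI[of _ b]) auto
  next
    case False
    have "a \<noteq> Suc b" using Suc by auto
    then have "a \<le> b" using Suc by auto
    from Suc.IH[OF Suc.prems(1) False this] show ?thesis by auto
  qed
qed

lemma greedy:
  fixes sx sy lx ly P0 N0 a' b' :: real
  assumes lx: "lx > 0" and ly: "ly > 0" and N0: "N0 > 0" and ax: "sx / lx < a'" and by': "b' < sy / ly"
  shows "\<exists>mode::nat\<Rightarrow>bool.
    (\<exists>\<^sub>\<infinity>n. (P0 + (\<Sum>m<n. if mode m then sx else sy)) / (N0 + (\<Sum>m<n. if mode m then lx else ly)) \<le> a') \<and>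
    (\<exists>\<^sub>\<infinity>n. b' \<le> (P0 + (\<Sum>m<n. if mode m then sx else sy)) / (N0 + (\<Sum>m<n. if mode m then lx else ly)))"
proof -
  define st :: "nat \<Rightarrow> real \<times> real \<times> bool" where
    "st = rec_nat (P0, N0, True) (\<lambda>_ s. (case s of (P, N, m) \<Rightarrow>
        (let P' = P + (if m then sx else sy); N' = N + (if m then lx else ly) in
          (P', N', if m then \<not> P' / N' \<le> a' else b' \<le> P' / N'))))"
  define mode where "mode n = snd (snd (st n))" for n
  define P where "P n = P0 + (\<Sum>m<n. if mode m then sx else sy)" for n
  define N where "N n = N0 + (\<Sum>m<n. if mode m then lx else ly)" for n
  define f where "f n = P n / N n" for n
  have st_eq: "st n = (P n, N n, mode n)" for n
  proof (induction n)
    case 0 then show ?case by (simp add: st_def P_def N_def mode_def)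
  next
    case (Suc n)
    have "st (Suc n) = (let P' = P n + (if mode n then sx else sy); N' = N n + (if mode n then lx else ly) in
          (P', N', if mode n then \<not> P' / N' \<le> a' else b' \<le> P' / N'))"
      using Suc by (simp add: st_def)
    moreover have "P (Suc n) = P n + (if mode n then sx else sy)" by (simp add: P_def)
    moreover have "N (Suc n) = N n + (if mode n then lx else ly)" by (simp add: N_def)
    ultimately have "st (Suc n) = (P (Suc n), N (Suc n), if mode n then \<not> f (Suc n) \<le> a' else b' \<le> f (Suc n))"
      by (simp add: Let_def f_def)
    moreover then have "mode (Suc n) = (if mode n then \<not> f (Suc n) \<le> a' else b' \<le> f (Suc n))"
      by (simp add: mode_def)
    ultimately show ?case by simp
  qed
  have mode_Suc: "mode (Suc n) = (if mode n then \<not> f (Suc n) \<le> a' else b' \<le> f (Suc n))" for n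
  proof -
    have "st (Suc n) = (let P' = P n + (if mode n then sx else sy); N' = N n + (if mode n then lx else ly) in
          (P', N', if mode n then \<not> P' / N' \<le> a' else b' \<le> P' / N'))"
      using st_eq[of n] by (simp add: st_def)
    moreover have "P (Suc n) = P n + (if mode n then sx else sy)" by (simp add: P_def)
    moreover have "N (Suc n) = N n + (if mode n then lx else ly)" by (simp add: N_def)
    ultimately show ?thesis using st_eq[of "Suc n"] by (simp add: Let_def f_def)
  qed
  have Npos: "N n > 0" for n
  proof -
    have "0 \<le> (\<Sum>m<n. if mode m then lx else ly)" by (rule sum_nonneg) (use lx ly in auto)
    then show ?thesis using N0 by (simp add: N_def)
  qed
  have notX: False if X: "\<forall>n\<ge>n0. mode n" for n0
  proof -
    have PX: "P (n0 + k) = P n0 + real k * sx \<and> N (n0 + k) = N n0 + real k * lx" for k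
    proof (induction k)
      case 0 then show ?case by simp
    next
      case (Suc k)
      have "mode (n0 + k)" using X by auto
      then show ?case using Suc by (simp add: P_def N_def algebra_simps)
    qed
    have d: "a' * lx - sx > 0" using ax lx by (simp add: field_simps)
    obtain k :: nat where k: "1 \<le> k" "P n0 - a' * N n0 \<le> real k * (a' * lx - sx)"
      using arch_mult[OF d] by blast
    have "P (n0 + k) \<le> a' * N (n0 + k)" using PX[of k] k(2) by (simp add: algebra_simps)
    then have fle: "f (n0 + k) \<le> a'" using Npos[of "n0+k"] by (simp add: f_def divide_le_eq)
    obtain k' where k': "k = Suc k'" using k(1) by (cases k) auto
    have "mode (n0 + k')" "mode (Suc (n0 + k'))" using X by auto
    then show False using mode_Suc[of "n0 + k'"] fle k' by simp
  qed
  have notY: False if Y: "\<forall>n\<ge>n0. \<not> mode n" for n0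
  proof -
    have PY: "P (n0 + k) = P n0 + real k * sy \<and> N (n0 + k) = N n0 + real k * ly" for k
    proof (induction k)
      case 0 then show ?case by simp
    next
      case (Suc k)
      have "\<not> mode (n0 + k)" using Y by auto
      then show ?case using Suc by (simp add: P_def N_def algebra_simps)
    qed
    have d: "sy - b' * ly > 0" using by' ly by (simp add: field_simps)
    obtain k :: nat where k: "1 \<le> k" "b' * N n0 - P n0 \<le> real k * (sy - b' * ly)"
      using arch_mult[OF d] by blast
    have "b' * N (n0 + k) \<le> P (n0 + k)" using PY[of k] k(2) by (simp add: algebra_simps)
    then have fge: "b' \<le> f (n0 + k)" using Npos[of "n0+k"] by (simp add: f_def le_divide_eq)
    obtain k' where k': "k = Suc k'" using k(1) by (cases k) auto
    have "\<not> mode (n0 + k')" "\<not> mode (Suc (n0 + k'))" using Y by auto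
    then show False using mode_Suc[of "n0 + k'"] fge k' by simp
  qed
  have inf1: "\<exists>n>M. mode n" for M
  proof -
    have "\<not>(\<forall>n\<ge>Suc M. \<not> mode n)" using notY by blast
    then show ?thesis by (auto simp: Suc_le_eq)
  qed
  have inf2: "\<exists>n>M. \<not> mode n" for M
  proof -
    have "\<not>(\<forall>n\<ge>Suc M. mode n)" using notX by blast
    then show ?thesis by (auto simp: Suc_le_eq)
  qed
  have A: "\<exists>\<^sub>\<infinity>n. f n \<le> a'"
    unfolding INFM_nat
  proof
    fix M
    obtain n1 where n1: "n1 > M" "mode n1" using inf1 by blast
    obtain n2 where n2: "n2 > n1" "\<not> mode n2" using inf2 by blast
    obtain n where n: "n1 \<le> n" "mode n" "\<not> mode (Suc n)"
      using transition_exists[of mode n1 n2] n1 n2 by auto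
    have "f (Suc n) \<le> a'" using mode_Suc[of n] n by simp
    then show "\<exists>n>M. f n \<le> a'" using n n1 by (intro exI[of _ "Suc n"]) auto
  qed
  have B: "\<exists>\<^sub>\<infinity>n. b' \<le> f n"
    unfolding INFM_nat
  proof
    fix M
    obtain n1 where n1: "n1 > M" "\<not> mode n1" using inf2 by blast
    obtain n2 where n2: "n2 > n1" "mode n2" using inf1 by blast
    obtain n where n: "n1 \<le> n" "\<not> mode n" "mode (Suc n)"
      using transition_exists[of "\<lambda>n. \<not> mode n" n1 n2] n1 n2 by auto
    have "b' \<le> f (Suc n)" using mode_Suc[of n] n by simp
    then show "\<exists>n>M. b' \<le> f n" using n n1 by (intro exI[of _ "Suc n"]) auto
  qed
  show ?thesis using A B by (intro exI[of _ mode]) (simp add: f_def P_def N_def)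
qed



lemma step_transfer:
  assumes st: "bpda_step delta w (q, t @ R) k (q', t' @ R) k'"
    and tne: "t \<noteq> []"
    and letter: "k' = Suc k \<Longrightarrow> v m = w k"
  shows "bpda_step delta v (q, t @ B) m (q', t' @ B) (m + (k' - k))"
proof -
  obtain a Z gam rest where tr: "(q, a, Z, q', gam) \<in> delta" and
    e1: "t @ R = Z # rest" and e2: "t' @ R = gam @ rest" and
    lab: "(a = None \<and> k' = k) \<or> (a = Some (w k) \<and> k' = Suc k)"
    using st unfolding bpda_step_def by auto
  from tne e1 have tZ: "t = Z # tl t" and rest: "rest = tl t @ R" by (cases t; auto)+
  from e2 rest have "t' = gam @ tl t" by simp
  then have c2: "(q', t' @ B) = (q', gam @ (tl t @ B))" by simp
  have c1: "(q, t @ B) = (q, Z # (tl t @ B))" using tZ by (metis append_Cons)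
  from lab show ?thesis
  proof
    assume "a = None \<and> k' = k"
    then show ?thesis unfolding bpda_step_def using tr c1 c2 by fastforce
  next
    assume h: "a = Some (w k) \<and> k' = Suc k"
    then have "a = Some (v m)" using letter by simp
    then show ?thesis unfolding bpda_step_def using tr c1 c2 h by fastforce
  qed
qed

definition pst :: "(nat \<Rightarrow> nat) \<Rightarrow> (nat \<Rightarrow> nat) \<Rightarrow> nat \<Rightarrow> nat" where
  "pst p \<sigma> k = (case k of 0 \<Rightarrow> 0 | Suc m \<Rightarrow> p (\<sigma> m))"
definition pen :: "(nat \<Rightarrow> nat) \<Rightarrow> (nat \<Rightarrow> nat) \<Rightarrow> nat \<Rightarrow> nat" where
  "pen p \<sigma> k = (case k of 0 \<Rightarrow> p 0 | Suc m \<Rightarrow> p (Suc (\<sigma> m)))"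
definition pumpw :: "(nat \<Rightarrow> nat) \<Rightarrow> (nat \<Rightarrow> nat) \<Rightarrow> (nat \<Rightarrow> nat) \<Rightarrow> nat \<Rightarrow> nat" where
  "pumpw w p \<sigma> = concat_pieces (\<lambda>k. pen p \<sigma> k - pst p \<sigma> k) (\<lambda>k i. w (pst p \<sigma> k + i))"

lemma pumping:
  assumes fin: "finite delta" and acc: "bpda_accepts delta q0 Z0 F w"
  shows "\<exists>p. strict_mono p \<and> 0 < p 0 \<and> (\<forall>\<sigma>. bpda_accepts delta q0 Z0 F (pumpw w p \<sigma>))"
proof -
  obtain c pos where c0: "c 0 = (q0, [Z0])" and pos0: "pos 0 = 0"
    and steps: "\<And>i. bpda_step delta w (c i) (pos i) (c (Suc i)) (pos (Suc i))"
    and unb: "\<And>n. \<exists>i. n \<le> pos i" and infF: "\<exists>\<^sub>\<infinity>i. fst (c i) \<in> F"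
    using acc unfolding bpda_accepts_def by blast
  define stk where "stk i = snd (c i)" for i
  have cstk: "c i = (fst (c i), stk i)" for i by (simp add: stk_def)
  have nonempty: "stk i \<noteq> []" for i
    using steps[of i] unfolding bpda_step_def stk_def by auto
  have posS: "pos i \<le> pos (Suc i) \<and> pos (Suc i) \<le> Suc (pos i)" for i
    using steps[of i] unfolding bpda_step_def by auto
  have posmono: "i \<le> j \<Longrightarrow> pos i \<le> pos j" for i j
    using posS by (metis lift_Suc_mono_le)
  define good where "good i = (\<forall>j\<ge>i. length (stk i) \<le> length (stk j))" for i
  have good_ex: "\<exists>i\<ge>n. good i" for n
  proof -
    obtain j where j: "n \<le> j" "\<forall>y. n \<le> y \<longrightarrow> length (stk j) \<le> length (stk y)"
      using ex_has_least_nat[of "\<lambda>j. n \<le> j" n "\<lambda>j. length (stk j)"] by auto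
    then have "good j" unfolding good_def by auto
    then show ?thesis using j by blast
  qed
  have decomp_ex: "\<exists>t. stk j = t @ tl (stk i) \<and> t \<noteq> []" if gi: "good i" and ij: "i \<le> j" for i j
    using ij
  proof (induction j rule: dec_induct)
    case base
    then show ?case using nonempty[of i] by (intro exI[of _ "[hd (stk i)]"]) (cases "stk i"; auto)
  next
    case (step n)
    then obtain t where t: "stk n = t @ tl (stk i)" "t \<noteq> []" by blast
    obtain pp a Z p' gam rest where "c n = (pp, Z # rest)" "c (Suc n) = (p', gam @ rest)"
      using steps[of n] unfolding bpda_step_def by auto
    then have e1: "stk n = Z # rest" and e2: "stk (Suc n) = gam @ rest" by (auto simp: stk_def)
    from t(2) obtain t0 ts where tt: "t = t0 # ts" by (cases t) auto
    from t(1) e1 tt have rest: "rest = tl t @ tl (stk i)" by simp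
    have "length (stk i) \<le> length (stk (Suc n))" using gi step(1) by (simp add: good_def)
    moreover have "length (stk i) = Suc (length (tl (stk i)))" using nonempty[of i] by (cases "stk i") auto
    moreover have "stk (Suc n) = (gam @ tl t) @ tl (stk i)" using e2 rest by simp
    ultimately have "gam @ tl t \<noteq> []" by (metis append_Nil le_imp_less_Suc less_irrefl)
    then show ?case using \<open>stk (Suc n) = (gam @ tl t) @ tl (stk i)\<close> by blast
  qed
  define rtop where "rtop i j = take (length (stk j) - length (tl (stk i))) (stk j)" for i j
  have decomp: "stk j = rtop i j @ tl (stk i) \<and> rtop i j \<noteq> []" if gi: "good i" and ij: "i \<le> j" for i j
  proof -
    obtain t where t: "stk j = t @ tl (stk i)" "t \<noteq> []" using decomp_ex[OF gi ij] by blast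
    then have "rtop i j = t" unfolding rtop_def by simp
    then show ?thesis using t by simp
  qed
  define sts where "sts = insert q0 ((\<lambda>(p,a,Z,p',gam). p') ` delta)"
  define syms where "syms = insert Z0 (\<Union>((\<lambda>(p,a,Z,p',gam). set gam) ` delta))"
  have inv: "fst (c i) \<in> sts \<and> set (stk i) \<subseteq> syms" for i
  proof (induction i)
    case 0 then show ?case by (simp add: c0 sts_def syms_def stk_def)
  next
    case (Suc i)
    obtain pp a Z p' gam rest where tr: "(pp, a, Z, p', gam) \<in> delta" and
      "c i = (pp, Z # rest)" "c (Suc i) = (p', gam @ rest)"
      using steps[of i] unfolding bpda_step_def by auto
    then have e1: "stk i = Z # rest" and e2: "c (Suc i) = (p', gam @ rest)" by (auto simp: stk_def)
    have "p' \<in> sts" using tr unfolding sts_def by force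
    moreover have "set gam \<subseteq> syms" using tr unfolding syms_def by force
    ultimately show ?case using Suc e1 e2 by (auto simp: stk_def)
  qed
  define key where "key i = (fst (c i), hd (stk i))" for i
  have finkeys: "finite (range key)"
  proof (rule finite_subset)
    show "range key \<subseteq> sts \<times> syms"
      using inv nonempty by (auto simp: key_def) (metis hd_in_set subsetD)
    show "finite (sts \<times> syms)" using fin unfolding sts_def syms_def
      by (auto intro!: finite_cartesian_product)
  qed
  define G where "G = {i. good i}"
  have infG: "infinite G" unfolding G_def infinite_nat_iff_unbounded_le using good_ex by blast
  obtain i0 where "i0 \<in> G" and infS0: "infinite {i \<in> G. key i = key i0}"
    using pigeonhole_infinite[OF infG finite_subset[OF _ finkeys]] by blast
  define S where "S = {i \<in> G. key i = key i0}"
  have infS: "infinite S" using infS0 by (simp add: S_def)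
  have S_good: "i \<in> S \<Longrightarrow> good i" for i by (simp add: S_def G_def)
  have S_key: "i \<in> S \<Longrightarrow> i' \<in> S \<Longrightarrow> key i = key i'" for i i' by (simp add: S_def)
  have nxt_ex: "\<exists>i'. i' \<in> S \<and> i < i' \<and> pos i < pos i' \<and> (\<exists>j. i \<le> j \<and> j < i' \<and> fst (c j) \<in> F)" for i
  proof -
    obtain j where j: "i \<le> j" "fst (c j) \<in> F" using infF unfolding INFM_nat_le by blast
    obtain j2 where j2: "Suc (pos i) \<le> pos j2" using unb by blast
    obtain i' where i': "i' \<in> S" "Suc (max j (max j2 i)) \<le> i'"
      using infS unfolding infinite_nat_iff_unbounded_le by blast
    have "pos j2 \<le> pos i'" using i' by (intro posmono) auto
    then show ?thesis using i' j j2 by (intro exI[of _ i']) auto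
  qed
  define nxt where "nxt i = (SOME i'. i' \<in> S \<and> i < i' \<and> pos i < pos i' \<and> (\<exists>j. i \<le> j \<and> j < i' \<and> fst (c j) \<in> F))" for i
  have nxt: "nxt i \<in> S \<and> i < nxt i \<and> pos i < pos (nxt i) \<and> (\<exists>j. i \<le> j \<and> j < nxt i \<and> fst (c j) \<in> F)" for i
    unfolding nxt_def by (rule someI_ex) (rule nxt_ex)
  define g where "g = rec_nat (nxt 0) (\<lambda>_ i. nxt i)"
  have g0: "g 0 = nxt 0" and gS: "g (Suc k) = nxt (g k)" for k by (simp_all add: g_def)
  have g_in: "g k \<in> S" for k by (cases k) (use nxt in \<open>auto simp: g0 gS\<close>)
  have g_lt: "g k < g (Suc k)" and gpos_lt: "pos (g k) < pos (g (Suc k))"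
    and gF: "\<exists>j. g k \<le> j \<and> j < g (Suc k) \<and> fst (c j) \<in> F" for k
    using nxt[of "g k"] by (auto simp: gS)
  have pg0: "0 < pos (g 0)" using nxt[of 0] by (simp add: g0 pos0)
  then have g0pos: "0 < g 0" using pos0 by (cases "g 0") auto
  define p where "p k = pos (g k)" for k
  have smp: "strict_mono p" unfolding strict_mono_Suc_iff p_def using gpos_lt by blast
  have "\<forall>\<sigma>. bpda_accepts delta q0 Z0 F (pumpw w p \<sigma>)"
  proof
    fix \<sigma> :: "nat \<Rightarrow> nat"
    define b where "b = pst g \<sigma>"
    define e where "e = pen g \<sigma>"
    define L where "L k = e k - b k" for k
    have b0: "b 0 = 0" and bS: "b (Suc k) = g (\<sigma> k)" for k by (simp_all add: b_def pst_def)
    have e0: "e 0 = g 0" and eS: "e (Suc k) = g (Suc (\<sigma> k))" for k by (simp_all add: e_def pen_def)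
    have b_e: "b k < e k" for k by (cases k) (use g0pos g_lt in \<open>auto simp: b0 bS e0 eS\<close>)
    have Lpos: "\<forall>k. 0 < L k" using b_e by (simp add: L_def)
    have bL: "b k + L k = e k" for k using b_e[of k] by (simp add: L_def)
    have pstp: "pst p \<sigma> k = pos (b k)" for k by (cases k) (auto simp: pst_def b0 bS p_def pos0)
    have penp: "pen p \<sigma> k = pos (e k)" for k by (cases k) (auto simp: pen_def e0 eS p_def)
    define l where "l k = pen p \<sigma> k - pst p \<sigma> k" for k
    have l_eq: "l k = pos (e k) - pos (b k)" for k by (simp add: l_def pstp penp)
    have lpos: "\<forall>k. 0 < l k"
    proof
      fix k show "0 < l k" by (cases k) (use pg0 gpos_lt in \<open>auto simp: l_eq b0 bS e0 eS pos0\<close>)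
    qed
    have bSS: "b (Suc k) \<in> S" for k using g_in by (simp add: bS)
    have eSS: "e k \<in> S" for k by (cases k) (use g_in in \<open>auto simp: e0 eS\<close>)
    define R where "R k = (if k = 0 then [] else tl (stk (b k)))" for k
    define top where "top k j = (if k = 0 then stk j else rtop (b k) j)" for k j
    have tdec: "stk j = top k j @ R k \<and> top k j \<noteq> []" if "b k \<le> j" for k j
    proof (cases k)
      case 0 then show ?thesis using nonempty[of j] by (simp add: top_def R_def)
    next
      case (Suc m)
      have "good (b k)" using S_good bSS Suc by blast
      from decomp[OF this that] show ?thesis using Suc by (simp add: top_def R_def)
    qed
    define B where "B = rec_nat [] (\<lambda>k X. tl (top k (e k)) @ X)"
    have B0: "B 0 = []" and BS: "B (Suc k) = tl (top k (e k)) @ B k" for k by (simp_all add: B_def)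
    define Off where "Off k = (\<Sum>m<k. l m)" for k
    define PP where "PP k i = ((fst (c (b k + i)), top k (b k + i) @ B k), Off k + (pos (b k + i) - pos (b k)))" for k i
    have cont: "\<forall>k. PP k (L k) = PP (Suc k) 0"
    proof
      fix k
      let ?b' = "b (Suc k)"
      have keq: "key (e k) = key ?b'" using S_key eSS bSS by blast
      have "stk ?b' = top (Suc k) ?b' @ tl (stk ?b')" using tdec[of "Suc k" ?b'] by (simp add: R_def)
      moreover obtain x xs where xs: "stk ?b' = x # xs" using nonempty[of ?b'] by (cases "stk ?b'") auto
      ultimately have "top (Suc k) ?b' @ xs = [x] @ xs" by simp
      then have t1: "top (Suc k) ?b' = [x]" by (rule append_same_eq[THEN iffD1])
      have "stk (e k) = top k (e k) @ R k" "top k (e k) \<noteq> []" using tdec[of k "e k"] b_e[of k] by auto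
      then have "hd (stk (e k)) = hd (top k (e k))" by (cases "top k (e k)") auto
      moreover have "hd (stk (e k)) = x" using keq xs by (simp add: key_def)
      ultimately have t2: "top k (e k) = x # tl (top k (e k))" using \<open>top k (e k) \<noteq> []\<close>
        by (cases "top k (e k)") auto
      have st: "fst (c (e k)) = fst (c ?b')" using keq by (simp add: key_def)
      have "top k (e k) @ B k = top (Suc k) ?b' @ B (Suc k)"
        using t1 t2 BS[of k] by (metis append_Cons append_Nil)
      moreover have "Off k + (pos (e k) - pos (b k)) = Off (Suc k) + (pos ?b' - pos ?b')"
        by (simp add: Off_def l_eq)
      ultimately show "PP k (L k) = PP (Suc k) 0" using st by (simp add: PP_def bL)
    qed
    define ff where "ff = concat_pieces L PP"
    have ffeq: "ff ((\<Sum>m<k. L m) + i) = PP k i" if "i \<le> L k" for k i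
      unfolding ff_def by (rule concat_pieces_eq_le[OF Lpos that cont])
    define v where "v = pumpw w p \<sigma>"
    have v_eq: "v ((\<Sum>m<k. l m) + i) = w (pos (b k) + i)" if "i < l k" for k i
    proof -
      have "v = concat_pieces l (\<lambda>k i. w (pst p \<sigma> k + i))"
        unfolding v_def pumpw_def l_def[abs_def] by simp
      then show ?thesis using concat_pieces_eq[OF lpos that] pstp by simp
    qed
    have "bpda_accepts delta q0 Z0 F v"
      unfolding bpda_accepts_def
    proof (intro exI[of _ "\<lambda>t. fst (ff t)"] exI[of _ "\<lambda>t. snd (ff t)"] conjI allI)
      have "ff 0 = PP 0 0" using ffeq[of 0 0] by simp
      then have "ff 0 = ((fst (c 0), stk 0), 0)" by (simp add: PP_def b0 top_def B0 Off_def)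
      then show "fst (ff 0) = (q0, [Z0])" "snd (ff 0) = 0" using c0 by (auto simp: stk_def)
    next
      fix t
      obtain k i where ki: "i < L k" "t = (\<Sum>m<k. L m) + i" using pieces_decomp[OF Lpos] by blast
      define j where "j = b k + i"
      have f1: "ff t = PP k i" using ffeq[of i k] ki by simp
      have f2: "ff (Suc t) = PP k (Suc i)" using ffeq[of "Suc i" k] ki by simp
      have bj: "b k \<le> j" and je: "Suc j \<le> e k" using ki bL[of k] by (auto simp: j_def)
      have pb: "pos (b k) \<le> pos j" using bj posmono by blast
      have pj: "pos j \<le> pos (Suc j)" using posS by blast
      have pe: "pos (Suc j) \<le> pos (e k)" using je posmono by blast
      have td1: "stk j = top k j @ R k" "top k j \<noteq> []" using tdec[OF bj] by auto
      have td2: "stk (Suc j) = top k (Suc j) @ R k" using tdec[of k "Suc j"] bj by auto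
      have st0: "bpda_step delta w (fst (c j), top k j @ R k) (pos j) (fst (c (Suc j)), top k (Suc j) @ R k) (pos (Suc j))"
        using steps[of j] cstk[of j] cstk[of "Suc j"] td1 td2 by simp
      define m where "m = Off k + (pos j - pos (b k))"
      have letter: "v m = w (pos j)" if "pos (Suc j) = Suc (pos j)"
      proof -
        have "pos j - pos (b k) < l k" using that pe pb by (simp add: l_eq)
        from v_eq[OF this] show ?thesis using pb by (simp add: m_def Off_def)
      qed
      have "bpda_step delta v (fst (c j), top k j @ B k) m (fst (c (Suc j)), top k (Suc j) @ B k) (m + (pos (Suc j) - pos j))"
        by (rule step_transfer[where t="top k j" and R="R k" and t'="top k (Suc j)" and B="B k" and v=v and m=m and k="pos j" and k'="pos (Suc j)" and w=w, OF st0 td1(2) letter])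
      moreover have "m + (pos (Suc j) - pos j) = Off k + (pos (Suc j) - pos (b k))"
        using pb pj by (simp add: m_def)
      ultimately have "bpda_step delta v (fst (c j), top k j @ B k) m (fst (c (Suc j)), top k (Suc j) @ B k) (Off k + (pos (Suc j) - pos (b k)))"
        by simp
      then show "bpda_step delta v (fst (ff t)) (snd (ff t)) (fst (ff (Suc t))) (snd (ff (Suc t)))"
        using f1 f2 by (simp add: PP_def m_def j_def)
    next
      fix n
      have "ff ((\<Sum>m<n. L m) + 0) = PP n 0" using ffeq[of 0 n] by simp
      then have "snd (ff (\<Sum>m<n. L m)) = Off n" by (simp add: PP_def)
      moreover have "n \<le> Off n" unfolding Off_def by (rule sum_ge_count[OF lpos])
      ultimately show "\<exists>i. n \<le> snd (ff i)" by metis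
    next
      show "\<exists>\<^sub>\<infinity>i. fst (fst (ff i)) \<in> F"
        unfolding INFM_nat
      proof
        fix M
        obtain j where j: "g (\<sigma> M) \<le> j" "j < g (Suc (\<sigma> M))" "fst (c j) \<in> F" using gF by blast
        define k where "k = Suc M"
        define i where "i = j - b k"
        have iL: "i < L k" and bi: "b k + i = j" using j by (auto simp: i_def L_def k_def bS eS)
        have "ff ((\<Sum>m<k. L m) + i) = PP k i" using ffeq[of i k] iL by simp
        moreover have "k \<le> (\<Sum>m<k. L m)" by (rule sum_ge_count[OF Lpos])
        ultimately show "\<exists>t>M. fst (fst (ff t)) \<in> F" using j(3) bi
          by (intro exI[of _ "(\<Sum>m<k. L m) + i"]) (auto simp: PP_def k_def)
      qed
    qed
    then show "bpda_accepts delta q0 Z0 F (pumpw w p \<sigma>)" by (simp add: v_def)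
  qed
  then show ?thesis using smp pg0 by (intro exI[of _ p]) (auto simp: p_def)
qed



lemma sqrt2_irr: "sqrt 2 \<notin> \<rat>"
proof
  assume "sqrt 2 \<in> \<rat>"
  then obtain m n :: nat where n: "n \<noteq> 0" and sq: "\<bar>sqrt 2\<bar> = real m / real n" and cop: "coprime m n"
    by (rule Rats_abs_nat_div_natE)
  have "real m = sqrt 2 * real n" using n sq by (simp add: field_simps)
  then have "real (m^2) = 2 * real (n^2)" by (simp add: power_mult_distrib)
  then have eq: "m^2 = 2 * n^2" by (simp only: of_nat_eq_iff[symmetric])
  then have "even (m^2)" by simp
  then have "even m" by simp
  then obtain k where k: "m = 2 * k" by blast
  with eq have "n^2 = 2 * k^2" by (simp add: power_mult_distrib)
  then have "even (n^2)" by simp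
  then have "even n" by simp
  with \<open>even m\<close> cop show False by fastforce
qed

lemma prefix_sum_add: "prefix_sum f (a + b) = prefix_sum f a + (\<Sum>i<b. real (f (a + i)))"
  by (induction b) (simp_all add: prefix_sum_def)

lemma prefix_sum_0[simp]: "prefix_sum f 0 = 0"
  by (simp add: prefix_sum_def)

lemma prefix_sum_rat: "prefix_sum f n \<in> \<rat>"
  unfolding prefix_sum_def by (rule Rats_sum) auto

lemma liminf_le_freq:
  fixes X :: "nat \<Rightarrow> real"
  assumes "\<forall>N. \<exists>m\<ge>N. X m \<le> a"
  shows "liminf (\<lambda>n. ereal (X n)) \<le> ereal a"
proof (rule ccontr)
  assume "\<not> ?thesis"
  then have "ereal a < liminf (\<lambda>n. ereal (X n))" by simp
  then have "eventually (\<lambda>n. ereal a < ereal (X n)) sequentially"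
    using le_Liminf_iff[of "liminf (\<lambda>n. ereal (X n))" sequentially "\<lambda>n. ereal (X n)"] by auto
  then obtain N where "\<forall>n\<ge>N. a < X n" unfolding eventually_sequentially by auto
  then show False using assms by force
qed

lemma limsup_ge_freq:
  fixes X :: "nat \<Rightarrow> real"
  assumes "\<forall>N. \<exists>m\<ge>N. b \<le> X m"
  shows "ereal b \<le> limsup (\<lambda>n. ereal (X n))"
proof (rule ccontr)
  assume "\<not> ?thesis"
  then have "limsup (\<lambda>n. ereal (X n)) < ereal b" by simp
  then have "eventually (\<lambda>n. ereal (X n) < ereal b) sequentially"
    using Limsup_le_iff[of sequentially "\<lambda>n. ereal (X n)" "limsup (\<lambda>n. ereal (X n))"] by auto
  then obtain N where "\<forall>n\<ge>N. X n < b" unfolding eventually_sequentially by auto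
  then show False using assms by force
qed

definition alpha :: real where "alpha = sqrt 2 - 1"
definition fl :: "nat \<Rightarrow> int" where "fl n = \<lfloor>real n * alpha\<rfloor>"
definition w0 :: "nat \<Rightarrow> nat" where "w0 n = nat (fl (Suc n) - fl n)"

lemma alpha_bounds: "0 < alpha" "alpha < 1"
proof -
  have "1 < sqrt 2" by (simp add: real_less_rsqrt)
  moreover have "sqrt 2 < 2" by (rule real_less_lsqrt) auto
  ultimately show "0 < alpha" "alpha < 1" unfolding alpha_def by auto
qed

lemma alpha_irr: "alpha \<notin> \<rat>"
proof
  assume "alpha \<in> \<rat>"
  then have "alpha + 1 \<in> \<rat>" by simp
  then show False using sqrt2_irr by (simp add: alpha_def)
qed

lemma fl_step: "fl n \<le> fl (Suc n) \<and> fl (Suc n) \<le> fl n + 1"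
proof -
  have "real n * alpha \<le> real (Suc n) * alpha" using alpha_bounds by (simp add: mult_right_mono)
  then have a: "fl n \<le> fl (Suc n)" unfolding fl_def by (rule floor_mono)
  have "real (Suc n) * alpha \<le> real n * alpha + 1" using alpha_bounds by (simp add: algebra_simps)
  then have "fl (Suc n) \<le> \<lfloor>real n * alpha + 1\<rfloor>" unfolding fl_def by (rule floor_mono)
  then have "fl (Suc n) \<le> fl n + 1" by (simp add: fl_def)
  with a show ?thesis by simp
qed

lemma w0_le1: "w0 n \<le> 1"
  using fl_step[of n] unfolding w0_def by arith

lemma prefix_w0: "prefix_sum w0 n = real_of_int (fl n)"
proof -
  have "prefix_sum w0 n = (\<Sum>j<n. real_of_int (fl (Suc j)) - real_of_int (fl j))"
    unfolding prefix_sum_def w0_def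
  proof (intro sum.cong refl)
    fix j show "real (nat (fl (Suc j) - fl j)) = real_of_int (fl (Suc j)) - real_of_int (fl j)"
      using fl_step[of j] by simp
  qed
  also have "\<dots> = real_of_int (fl n) - real_of_int (fl 0)" by (rule sum_lessThan_telescope)
  finally show ?thesis by (simp add: fl_def)
qed

lemma avg_w0: "(\<lambda>n. prefix_sum w0 n / real n) \<longlonglongrightarrow> alpha"
proof (rule tendsto_sandwich[of "\<lambda>n. alpha - 1 / real n" _ _ "\<lambda>n. alpha"])
  show "\<forall>\<^sub>F n in sequentially. alpha - 1 / real n \<le> prefix_sum w0 n / real n"
    unfolding eventually_sequentially
  proof (intro exI[of _ 1] allI impI)
    fix n :: nat assume "1 \<le> n"
    have "real n * alpha - 1 \<le> real_of_int (fl n)" unfolding fl_def by linarith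
    then have "(real n * alpha - 1) / real n \<le> real_of_int (fl n) / real n"
      by (rule divide_right_mono) simp
    moreover have "alpha - 1 / real n = (real n * alpha - 1) / real n" using \<open>1 \<le> n\<close>
      by (simp add: field_simps)
    ultimately show "alpha - 1 / real n \<le> prefix_sum w0 n / real n" by (simp add: prefix_w0)
  qed
  show "\<forall>\<^sub>F n in sequentially. prefix_sum w0 n / real n \<le> alpha"
    unfolding eventually_sequentially
  proof (intro exI[of _ 1] allI impI)
    fix n :: nat assume "1 \<le> n"
    have "real_of_int (fl n) \<le> real n * alpha" unfolding fl_def by linarith
    then show "prefix_sum w0 n / real n \<le> alpha" using \<open>1 \<le> n\<close>
      by (simp add: prefix_w0 field_simps)
  qed
  show "(\<lambda>n. alpha - 1 / real n) \<longlonglongrightarrow> alpha"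
    using tendsto_diff[OF tendsto_const lim_inverse_n', of alpha] by simp
qed auto

lemma lae_of_lim:
  assumes "(\<lambda>n. prefix_sum M n / real n) \<longlonglongrightarrow> a"
  shows "limit_average_exists M"
proof -
  have l: "(\<lambda>n. ereal (prefix_sum M n / real n)) \<longlonglongrightarrow> ereal a" using assms by simp
  show ?thesis unfolding limit_average_exists_def
    using lim_imp_Liminf[OF _ l] lim_imp_Limsup[OF _ l] by simp
qed

lemma w0_in: "0 < mu \<Longrightarrow> w0 \<in> L_LA mu"
proof -
  assume "0 < mu"
  then have "w0 i \<le> mu" for i using w0_le1[of i] by linarith
  then show ?thesis unfolding L_LA_def omega_words_def using lae_of_lim[OF avg_w0] by auto
qed



lemma plen_pos:
  assumes "strict_mono p" "0 < p 0"
  shows "\<forall>k. 0 < pen p \<sigma> k - pst p \<sigma> k"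
proof
  fix k show "0 < pen p \<sigma> k - pst p \<sigma> k"
    using assms by (cases k) (auto simp: pen_def pst_def strict_mono_Suc_iff)
qed

lemma pst_le_pen: "strict_mono p \<Longrightarrow> pst p \<sigma> k \<le> pen p \<sigma> k"
  by (cases k) (auto simp: pen_def pst_def strict_mono_Suc_iff less_imp_le)

lemma pumpw_eq:
  assumes "strict_mono p" "0 < p 0" "i < pen p \<sigma> k - pst p \<sigma> k"
  shows "pumpw w p \<sigma> ((\<Sum>m<k. pen p \<sigma> m - pst p \<sigma> m) + i) = w (pst p \<sigma> k + i)"
  unfolding pumpw_def by (rule concat_pieces_eq[OF plen_pos[OF assms(1,2)] assms(3)])

lemma pumpw_words:
  assumes "strict_mono p" "0 < p 0" "w \<in> omega_words Sig"
  shows "pumpw w p \<sigma> \<in> omega_words Sig"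
  unfolding omega_words_def
proof (intro CollectI allI)
  fix n
  obtain k i where ki: "i < pen p \<sigma> k - pst p \<sigma> k" "n = (\<Sum>m<k. pen p \<sigma> m - pst p \<sigma> m) + i"
    using pieces_decomp[OF plen_pos[OF assms(1,2)]] by blast
  then show "pumpw w p \<sigma> n \<in> Sig" using pumpw_eq[OF assms(1,2) ki(1)] assms(3)
    by (simp add: omega_words_def)
qed

lemma pumpw_prefix:
  assumes "strict_mono p" "0 < p 0"
  shows "prefix_sum (pumpw w p \<sigma>) (\<Sum>m<k. pen p \<sigma> m - pst p \<sigma> m)
     = (\<Sum>m<k. prefix_sum w (pen p \<sigma> m) - prefix_sum w (pst p \<sigma> m))"
proof (induction k)
  case 0 then show ?case by simp
next
  case (Suc k)
  let ?T = "\<Sum>m<k. pen p \<sigma> m - pst p \<sigma> m"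
  let ?l = "pen p \<sigma> k - pst p \<sigma> k"
  have "prefix_sum (pumpw w p \<sigma>) (?T + ?l) = prefix_sum (pumpw w p \<sigma>) ?T + (\<Sum>i<?l. real (pumpw w p \<sigma> (?T + i)))"
    by (rule prefix_sum_add)
  also have "(\<Sum>i<?l. real (pumpw w p \<sigma> (?T + i))) = (\<Sum>i<?l. real (w (pst p \<sigma> k + i)))"
    using pumpw_eq[OF assms] by (intro sum.cong) auto
  also have "\<dots> = prefix_sum w (pst p \<sigma> k + ?l) - prefix_sum w (pst p \<sigma> k)"
    using prefix_sum_add[of w "pst p \<sigma> k" ?l] by simp
  also have "pst p \<sigma> k + ?l = pen p \<sigma> k" using pst_le_pen[OF assms(1)] by simp
  finally show ?case using Suc by simp
qed

lemma not_cf: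
  assumes mu: "0 < mu"
  shows "\<not> omega_context_free {0..mu} (L_LA mu)"
proof
  assume "omega_context_free {0..mu} (L_LA mu)"
  then obtain delta q0 Z0 F where fin: "finite delta" and
    Leq: "L_LA mu = {w \<in> omega_words {0..mu}. bpda_accepts delta q0 Z0 F w}"
    unfolding omega_context_free_def by blast
  have "bpda_accepts delta q0 Z0 F w0" using w0_in[OF mu] Leq by blast
  from pumping[OF fin this] obtain p where smp: "strict_mono p" and p0: "0 < p 0"
    and accp: "\<And>\<sigma>. bpda_accepts delta q0 Z0 F (pumpw w0 p \<sigma>)" by blast
  define s where "s j = prefix_sum w0 (p (Suc j)) - prefix_sum w0 (p j)" for j
  define l where "l j = real (p (Suc j) - p j)" for j
  have lpos: "0 < l j" for j using smp by (simp add: l_def strict_mono_Suc_iff)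
  have l_eq: "l j = real (p (Suc j)) - real (p j)" for j
    using smp by (simp add: l_def strict_mono_Suc_iff less_imp_le of_nat_diff)
  have "\<exists>j. s j / l j \<noteq> s 0 / l 0"
  proof (rule ccontr)
    assume "\<not> ?thesis"
    then have h: "s j / l j = s 0 / l 0" for j by blast
    have all: "s j = (s 0 / l 0) * l j" for j
    proof -
      have "s j = (s j / l j) * l j" using lpos[of j] by simp
      then show ?thesis using h[of j] by simp
    qed
    define c where "c = s 0 / l 0"
    define P0 where "P0 = prefix_sum w0 (p 0)"
    have ps: "prefix_sum w0 (p k) = P0 + c * (real (p k) - real (p 0))" for k
    proof (induction k)
      case 0 then show ?case by (simp add: P0_def)
    next
      case (Suc k)
      have "prefix_sum w0 (p (Suc k)) = prefix_sum w0 (p k) + s k" by (simp add: s_def)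
      moreover have "s k = c * l k" using all[of k] by (simp add: c_def)
      moreover have "c * (real (p k) - real (p 0)) + c * l k = c * (real (p (Suc k)) - real (p 0))"
        by (simp add: l_eq algebra_simps)
      ultimately show ?case using Suc by simp
    qed
    have lim1: "(\<lambda>k. prefix_sum w0 (p k) / real (p k)) \<longlonglongrightarrow> alpha"
      using LIMSEQ_subseq_LIMSEQ[OF avg_w0 smp] by (simp add: o_def)
    have at: "filterlim (\<lambda>k. real (p k)) at_top sequentially"
      using filterlim_compose[OF filterlim_real_sequentially filterlim_subseq[OF smp]] by (simp add: o_def)
    have "(\<lambda>k. (P0 - c * real (p 0)) / real (p k)) \<longlonglongrightarrow> 0"
      by (rule tendsto_divide_0[OF tendsto_const filterlim_at_top_imp_at_infinity[OF at]])
    then have "(\<lambda>k. c + (P0 - c * real (p 0)) / real (p k)) \<longlonglongrightarrow> c + 0"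
      by (intro tendsto_add tendsto_const)
    moreover have "c + (P0 - c * real (p 0)) / real (p k) = prefix_sum w0 (p k) / real (p k)" for k
    proof -
      have "0 < p k" using p0 smp by (metis le0 less_le_trans strict_mono_less_eq)
      then show ?thesis by (simp add: ps field_simps)
    qed
    ultimately have lim2: "(\<lambda>k. prefix_sum w0 (p k) / real (p k)) \<longlonglongrightarrow> c" by simp
    have "alpha = c" using LIMSEQ_unique[OF lim1 lim2] .
    have "s 0 \<in> \<rat>" unfolding s_def by (intro Rats_diff prefix_sum_rat)
    moreover have "l 0 \<in> \<rat>" unfolding l_def by (rule Rats_of_nat)
    ultimately have "c \<in> \<rat>" unfolding c_def by (rule Rats_divide)
    moreover note \<open>alpha = c\<close>
    ultimately show False using alpha_irr by simp
  qed
  then obtain j1 where j1: "s j1 / l j1 \<noteq> s 0 / l 0" by blast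
  obtain kx ky where kxy: "s kx / l kx < s ky / l ky"
  proof (cases "s j1 / l j1 < s 0 / l 0")
    case True then show ?thesis using that by blast
  next
    case False then have "s 0 / l 0 < s j1 / l j1" using j1 by auto
    then show ?thesis using that by blast
  qed
  define a where "a = s kx / l kx"
  define b where "b = s ky / l ky"
  define a' where "a' = a + (b - a) / 3"
  define b' where "b' = b - (b - a) / 3"
  have ab: "a < b" using kxy by (simp add: a_def b_def)
  have d3: "0 < (b - a) / 3" using ab by simp
  have "a < a'" using d3 unfolding a'_def by simp
  have "b' < b" using d3 unfolding b'_def by simp
  have "a' < b'" using d3 unfolding a'_def b'_def by (simp add: field_simps)
  define P0 where "P0 = prefix_sum w0 (p 0)"
  define N0 where "N0 = real (p 0)"
  have N0: "0 < N0" using p0 by (simp add: N0_def)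
  have ax: "s kx / l kx < a'" and by': "b' < s ky / l ky" using \<open>a < a'\<close> \<open>b' < b\<close> by (simp_all add: a_def b_def)
  have "\<exists>mode::nat\<Rightarrow>bool.
    (\<exists>\<^sub>\<infinity>n. (P0 + (\<Sum>m<n. if mode m then s kx else s ky)) / (N0 + (\<Sum>m<n. if mode m then l kx else l ky)) \<le> a') \<and>
    (\<exists>\<^sub>\<infinity>n. b' \<le> (P0 + (\<Sum>m<n. if mode m then s kx else s ky)) / (N0 + (\<Sum>m<n. if mode m then l kx else l ky)))"
    by (rule greedy[OF lpos lpos N0 ax by'])
  then obtain mode :: "nat \<Rightarrow> bool" where AB:
    "(\<exists>\<^sub>\<infinity>n. (P0 + (\<Sum>m<n. if mode m then s kx else s ky)) / (N0 + (\<Sum>m<n. if mode m then l kx else l ky)) \<le> a') \<and>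
    (\<exists>\<^sub>\<infinity>n. b' \<le> (P0 + (\<Sum>m<n. if mode m then s kx else s ky)) / (N0 + (\<Sum>m<n. if mode m then l kx else l ky)))" ..
  note A = AB[THEN conjunct1] and B = AB[THEN conjunct2]
  define \<sigma> where "\<sigma> m = (if mode m then kx else ky)" for m
  define v where "v = pumpw w0 p \<sigma>"
  have "v \<in> omega_words {0..mu}" unfolding v_def
    by (rule pumpw_words[OF smp p0]) (use w0_in[OF mu] in \<open>simp add: L_LA_def\<close>)
  then have "v \<in> L_LA mu" using accp Leq by (simp add: v_def)
  then have lae: "limit_average_exists v" by (simp add: L_LA_def)
  define T where "T n = (\<Sum>m<Suc n. pen p \<sigma> m - pst p \<sigma> m)" for n
  have Tge: "Suc n \<le> T n" for n unfolding T_def by (rule sum_ge_count[OF plen_pos[OF smp p0]])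
  have avgT: "prefix_sum v (T n) / real (T n) =
      (P0 + (\<Sum>m<n. if mode m then s kx else s ky)) / (N0 + (\<Sum>m<n. if mode m then l kx else l ky))" for n
  proof -
    have "prefix_sum v (T n) = (\<Sum>m<Suc n. prefix_sum w0 (pen p \<sigma> m) - prefix_sum w0 (pst p \<sigma> m))"
      unfolding T_def v_def by (rule pumpw_prefix[OF smp p0])
    also have "\<dots> = P0 + (\<Sum>m<n. if mode m then s kx else s ky)"
      unfolding sum.lessThan_Suc_shift by (simp add: pen_def pst_def P0_def \<sigma>_def) (rule sum.cong, auto simp: s_def)
    finally have 1: "prefix_sum v (T n) = P0 + (\<Sum>m<n. if mode m then s kx else s ky)" .
    have "real (T n) = (\<Sum>m<Suc n. real (pen p \<sigma> m - pst p \<sigma> m))" by (simp add: T_def)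
    also have "\<dots> = N0 + (\<Sum>m<n. if mode m then l kx else l ky)"
      unfolding sum.lessThan_Suc_shift by (simp add: pen_def pst_def N0_def \<sigma>_def) (rule sum.cong, auto simp: l_def)
    finally show ?thesis using 1 by simp
  qed
  define X where "X n = prefix_sum v n / real n" for n
  have "\<forall>N. \<exists>m\<ge>N. X m \<le> a'"
  proof
    fix N
    obtain n where "n > N" and "prefix_sum v (T n) / real (T n) \<le> a'" using A unfolding INFM_nat avgT by blast
    then show "\<exists>m\<ge>N. X m \<le> a'" using Tge[of n] by (intro exI[of _ "T n"]) (auto simp: X_def)
  qed
  then have li: "liminf (\<lambda>n. ereal (X n)) \<le> ereal a'" by (rule liminf_le_freq)
  have "\<forall>N. \<exists>m\<ge>N. b' \<le> X m"
  proof
    fix N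
    obtain n where "n > N" and "b' \<le> prefix_sum v (T n) / real (T n)" using B unfolding INFM_nat avgT by blast
    then show "\<exists>m\<ge>N. b' \<le> X m" using Tge[of n] by (intro exI[of _ "T n"]) (auto simp: X_def)
  qed
  then have ls: "ereal b' \<le> limsup (\<lambda>n. ereal (X n))" by (rule limsup_ge_freq)
  have "liminf (\<lambda>n. ereal (X n)) = limsup (\<lambda>n. ereal (X n))"
    using lae unfolding limit_average_exists_def X_def by simp
  then have "ereal b' \<le> ereal a'" using li ls by (metis order.trans)
  then show False using \<open>a' < b'\<close> by simp
qed


lemma dl_step:
  assumes "bpda_step ((\<lambda>(p,a,p'). (p, Some a, 0::nat, p', [0::nat])) ` delta) w c k c' k'" "snd c = [0]"
  shows "snd c' = [0] \<and> k' = Suc k \<and> (fst c, w k, fst c') \<in> delta"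
proof -
  obtain p a Z p' gam rest where tr: "(p, a, Z, p', gam) \<in> (\<lambda>(p,a,p'). (p, Some a, 0::nat, p', [0::nat])) ` delta"
    and e: "c = (p, Z # rest)" "c' = (p', gam @ rest)"
    and lab: "(a = None \<and> k' = k) \<or> (a = Some (w k) \<and> k' = Suc k)"
    using assms(1) unfolding bpda_step_def by blast
  from tr obtain x where x: "(p, x, p') \<in> delta" "a = Some x" "Z = 0" "gam = [0]" by auto
  have "rest = []" using e assms(2) by simp
  then show ?thesis using e x lab by auto
qed

lemma reg_imp_cf:
  assumes reg: "omega_regular Sig L" and finS: "finite Sig"
  shows "omega_context_free Sig L"
proof -
  obtain Q delta q0 F where Lsub: "L \<subseteq> omega_words Sig" and finQ: "finite Q" and dsub: "delta \<subseteq> Q \<times> Sig \<times> Q"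
    and q0: "q0 \<in> Q" and FQ: "F \<subseteq> Q" and Leq: "L = {w \<in> omega_words Sig. buchi_accepts delta q0 F w}"
    using reg unfolding omega_regular_def by blast
  define dl where "dl = (\<lambda>(p,a,p'). (p, Some a, 0::nat, p', [0::nat])) ` delta"
  have eq: "buchi_accepts delta q0 F w = bpda_accepts dl q0 0 F w" for w
  proof
    assume "buchi_accepts delta q0 F w"
    then obtain r where r0: "r 0 = q0" and tr: "\<And>i. (r i, w i, r (Suc i)) \<in> delta" and inf: "\<exists>\<^sub>\<infinity>i. r i \<in> F"
      unfolding buchi_accepts_def by blast
    have st: "bpda_step dl w (r i, [0]) i (r (Suc i), [0]) (Suc i)" for i
    proof -
      have "(r i, Some (w i), 0, r (Suc i), [0]) \<in> dl" using tr[of i] unfolding dl_def by force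
      then show ?thesis unfolding bpda_step_def by fastforce
    qed
    show "bpda_accepts dl q0 0 F w" unfolding bpda_accepts_def
      by (intro exI[of _ "\<lambda>i. (r i, [0])"] exI[of _ "\<lambda>i. i"]) (use r0 st inf in auto)
  next
    assume "bpda_accepts dl q0 0 F w"
    then obtain c pos where c0: "c 0 = (q0, [0])" and pos0: "pos 0 = 0"
      and steps: "\<And>i. bpda_step dl w (c i) (pos i) (c (Suc i)) (pos (Suc i))"
      and inf: "\<exists>\<^sub>\<infinity>i. fst (c i) \<in> F"
      unfolding bpda_accepts_def by blast
    have inv: "snd (c i) = [0] \<and> pos i = i" for i
    proof (induction i)
      case 0 then show ?case using c0 pos0 by simp
    next
      case (Suc i)
      then show ?case using dl_step[OF steps[of i, unfolded dl_def]] by simp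
    qed
    have tr: "(fst (c i), w i, fst (c (Suc i))) \<in> delta" for i
      using dl_step[OF steps[of i, unfolded dl_def]] inv[of i] by simp
    show "buchi_accepts delta q0 F w" unfolding buchi_accepts_def
      by (intro exI[of _ "\<lambda>i. fst (c i)"]) (use c0 tr inf in auto)
  qed
  have finD: "finite delta" using finite_subset[OF dsub] finQ finS by auto
  have f1: "finite dl" using finD by (simp add: dl_def)
  have f2: "dl \<subseteq> {(p, a, Z, p', gam). p \<in> Q \<and> (a = None \<or> the a \<in> Sig) \<and> Z \<in> {0::nat} \<and> p' \<in> Q \<and> set gam \<subseteq> {0::nat}}"
    using dsub unfolding dl_def by auto
  have f3: "L = {w \<in> omega_words Sig. bpda_accepts dl q0 0 F w}" using Leq eq by auto
  show ?thesis unfolding omega_context_free_def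
    apply (rule conjI[OF Lsub])
    apply (rule exI[of _ Q], rule exI[of _ "{0::nat}"], rule exI[of _ dl], rule exI[of _ q0], rule exI[of _ "0::nat"], rule exI[of _ F])
    using finQ f1 f2 q0 FQ f3 by simp
qed

theorem theorem15:
  fixes mu :: nat
  assumes "mu > 0"
  shows "\<not> omega_regular {0..mu} (L_LA mu) \<and> \<not> omega_context_free {0..mu} (L_LA mu)"
  using not_cf[OF assms] reg_imp_cf[of "{0..mu}" "L_LA mu"] by auto


end
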